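(* Let $d\in\mathbb{N}$ and let $p:\mathbb{Z}^d\to[0,1)$ satisfy $\sum_{x}p(x)=1$, $p(x)=0$ for $|x|>M$ for some $M<\infty$, and the strong aperiodicity property: for every $u\in\mathbb{Z}^d$ the smallest additive subgroup of $\mathbb{Z}^d$ containing $\{u+x:p(x)>0\}$ is $\mathbb{Z}^d$. Write $p(x,y)=p(y-x)$ and let $m_p=\sum_{x\in\mathbb{Z}^d}x\,p(x)\in\mathbb{R}^d$. Let $\{\xi_t(x)\}_{t\in\mathbb{Z},x\in\mathbb{Z}^d}$ be i.i.d. real random variables with mean $0$ and finite variance. For each $n$ let $h^n_t=\{h^n_t(x)\}_{x\in\mathbb{Z}^d}$, $t\in\mathbb{Z}_+$, be a harness process, i.e. $h^n_{t+1}(x)=\sum_{y}p(x,y)h^n_t(y)+\xi_{t+1}(x)$ with $\{\xi_{s}\}_{s\ge 1}$ independent of $h^n_0$. Let $u_0:\mathbb{R}^d\to\mathbb{R}$ be continuous and define $u(t,x)=u_0(x+t m_p)$. Assume that for all $\varepsilon>0$ and $R<\infty$, \[\lim_{n\to\infty}\mathbf{P}\Bigl\{\sup_{x\in\mathbb{R}^d:|x|\le R}\bigl|n^{-1}h^n_0(\lfloor nx\rfloor)-u_0(x)\bigr|\ge\varepsilon\Bigr\}=0.\] Then for all $\varepsilon>0$ and $(t,x)\in\mathbb{R}_+\times\mathbb{R}^d$, \[\lim_{n\to\infty}\mathbf{P}\bigl\{\bigl|n^{-1}h^n_{\lfloor nt\rfloor}(\lfloor nx\rfloor)-u(t,x)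\bigr|\ge\varepsilon\bigr\}=0.\]
   Context: $\lfloor nx\rfloor$ for $x\in\mathbb{R}^d$ denotes the componentwise integer part. $\mathbf{P}$ denotes the probability measure of the processes. *)

theory Defs
  imports "HOL-Probability.Probability"
begin

definition of_int_vec :: "int ^ 'd \<Rightarrow> real ^ 'd" where
  "of_int_vec x = (\<chi> i. real_of_int (x $ i))"

definition floor_vec :: "nat \<Rightarrow> real ^ 'd \<Rightarrow> int ^ 'd" where
  "floor_vec n x = (\<chi> i. \<lfloor>real n * x $ i\<rfloor>)"

definition add_subgroup_gen :: "'a::ab_group_add set \<Rightarrow> 'a set" where
  "add_subgroup_gen S = \<Inter>{G. S \<subseteq> G \<and> 0 \<in> G \<and> (\<forall>a\<in>G. \<forall>b\<in>G. a - b \<in> G)}"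

definition mean_drift :: "(int ^ 'd \<Rightarrow> real) \<Rightarrow> real ^ 'd" where
  "mean_drift p = (\<Sum>x\<in>{x. p x \<noteq> 0}. p x *\<^sub>R of_int_vec x)"

definition gen_sigma :: "'w measure \<Rightarrow> ('i \<Rightarrow> 'w \<Rightarrow> real) \<Rightarrow> 'i set \<Rightarrow> 'w set set" where
  "gen_sigma M X I = sigma_sets (space M) (\<Union>i\<in>I. {X i -` B \<inter> space M | B. B \<in> sets borel})"

end

theory Submission
  imports Defs
begin

definition Top :: "(int^'d \<Rightarrow> real) \<Rightarrow> (int^'d) set \<Rightarrow> (int^'d \<Rightarrow> real) \<Rightarrow> int^'d \<Rightarrow> real" where
  "Top p S f x = (\<Sum>w\<in>S. p w * f (x + w))"

lemma ov_add: "of_int_vec (a + b) = of_int_vec a + of_int_vec b"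
  by (simp add: of_int_vec_def vec_eq_iff)
lemma ov_diff: "of_int_vec (a - b) = of_int_vec a - of_int_vec b"
  by (simp add: of_int_vec_def vec_eq_iff)

lemma Top_add: "Top p S (\<lambda>y. f y + g y) = (\<lambda>x. Top p S f x + Top p S g x)"
  by (auto simp: Top_def sum.distrib distrib_left)
lemma Top_scale: "Top p S (\<lambda>y. c * f y) = (\<lambda>x. c * Top p S f x)"
  by (auto simp: Top_def sum_distrib_left mult_ac)
lemma Top_const: "sum p S = 1 \<Longrightarrow> Top p S (\<lambda>y. c) = (\<lambda>x. c)"
  by (auto simp: Top_def simp flip: sum_distrib_right)

lemma Tk_add: "(Top p S ^^ k) (\<lambda>y. f y + g y) = (\<lambda>x. (Top p S ^^ k) f x + (Top p S ^^ k) g x)"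
  by (induction k) (simp_all add: Top_add)
lemma Tk_scale: "(Top p S ^^ k) (\<lambda>y. c * f y) = (\<lambda>x. c * (Top p S ^^ k) f x)"
  by (induction k) (simp_all add: Top_scale)
lemma Tk_const: "sum p S = 1 \<Longrightarrow> (Top p S ^^ k) (\<lambda>y. c) = (\<lambda>x. c)"
  by (induction k) (simp_all add: Top_const)

lemma Tk_Suc_apply: "(Top p S ^^ Suc k) f x = (\<Sum>w\<in>S. p w * (Top p S ^^ k) f (x + w))"
  by (simp add: Top_def)

lemma Tk_mono_local:
  assumes pos: "\<And>w. w \<in> S \<Longrightarrow> 0 \<le> p w"
    and bd: "\<And>w. w \<in> S \<Longrightarrow> norm (of_int_vec w) \<le> Mb"
  shows "(\<And>y. norm (of_int_vec y - of_int_vec x) \<le> real k * Mb \<Longrightarrow> f y \<le> g y)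
     \<Longrightarrow> (Top p S ^^ k) f x \<le> (Top p S ^^ k) g x"
proof (induction k arbitrary: x)
  case 0
  then show ?case by simp
next
  case (Suc k)
  have "(Top p S ^^ k) f (x + w) \<le> (Top p S ^^ k) g (x + w)" if w: "w \<in> S" for w
  proof (rule Suc.IH)
    fix y assume "norm (of_int_vec y - of_int_vec (x + w)) \<le> real k * Mb"
    moreover have "norm (of_int_vec y - of_int_vec x) \<le> norm (of_int_vec y - of_int_vec (x + w)) + norm (of_int_vec w)"
      using norm_triangle_ineq[of "of_int_vec y - of_int_vec (x + w)" "of_int_vec w"]
      by (simp add: ov_add algebra_simps)
    ultimately have "norm (of_int_vec y - of_int_vec x) \<le> real (Suc k) * Mb"
      using bd[OF w] by (simp add: algebra_simps)
    then show "f y \<le> g y" using Suc.prems by blast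
  qed
  then show ?case
    unfolding Tk_Suc_apply by (intro sum_mono mult_left_mono, auto intro: pos)
qed

lemma one_step_quad:
  fixes a :: "real^'d"
  assumes fin: "finite S" and s1: "sum p S = 1"
  shows "(\<Sum>w\<in>S. p w * (norm (a + (of_int_vec w - (\<Sum>v\<in>S. p v *\<^sub>R of_int_vec v))))\<^sup>2)
     = (norm a)\<^sup>2 + (\<Sum>w\<in>S. p w * (norm (of_int_vec w - (\<Sum>v\<in>S. p v *\<^sub>R of_int_vec v)))\<^sup>2)"
proof -
  define m where "m = (\<Sum>v\<in>S. p v *\<^sub>R of_int_vec v)"
  have z: "(\<Sum>w\<in>S. p w *\<^sub>R (of_int_vec w - m)) = 0"
    by (simp add: scaleR_diff_right sum_subtractf m_def flip: scaleR_sum_left add: s1)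
  have "(\<Sum>w\<in>S. p w * (a \<bullet> (of_int_vec w - m))) = a \<bullet> (\<Sum>w\<in>S. p w *\<^sub>R (of_int_vec w - m))"
    by (simp add: inner_sum_right)
  also have "\<dots> = 0" using z by simp
  finally have z2: "(\<Sum>w\<in>S. p w * (a \<bullet> (of_int_vec w - m))) = 0" .
  have e: "\<And>w. p w * (norm (a + (of_int_vec w - m)))\<^sup>2 = p w * (norm a)\<^sup>2 + 2 * (p w * (a \<bullet> (of_int_vec w - m))) + p w * (norm (of_int_vec w - m))\<^sup>2"
    by (simp add: power2_norm_eq_inner inner_add algebra_simps inner_commute)
  show ?thesis
    unfolding m_def[symmetric]
    by (simp add: e sum.distrib z2 flip: sum_distrib_left sum_distrib_right add: s1)
qed

lemma Tk_quad:
  assumes fin: "finite S" and s1: "sum p S = 1"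
  shows "(Top p S ^^ k) (\<lambda>y. (norm (of_int_vec y - C))\<^sup>2) x
     = (norm (of_int_vec x + real k *\<^sub>R (\<Sum>v\<in>S. p v *\<^sub>R of_int_vec v) - C))\<^sup>2
       + real k * (\<Sum>w\<in>S. p w * (norm (of_int_vec w - (\<Sum>v\<in>S. p v *\<^sub>R of_int_vec v)))\<^sup>2)"
proof (induction k arbitrary: x)
  case 0
  then show ?case by simp
next
  case (Suc k)
  define m where "m = (\<Sum>v\<in>S. p v *\<^sub>R of_int_vec v)"
  define V where "V = (\<Sum>w\<in>S. p w * (norm (of_int_vec w - m))\<^sup>2)"
  have IH: "\<And>x. (Top p S ^^ k) (\<lambda>y. (norm (of_int_vec y - C))\<^sup>2) x = (norm (of_int_vec x + real k *\<^sub>R m - C))\<^sup>2 + real k * V"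
    using Suc.IH m_def V_def by simp
  have r: "\<And>w. of_int_vec (x + w) + real k *\<^sub>R m - C = (of_int_vec x + real (Suc k) *\<^sub>R m - C) + (of_int_vec w - m)"
    by (simp add: ov_add algebra_simps)
  have "(Top p S ^^ Suc k) (\<lambda>y. (norm (of_int_vec y - C))\<^sup>2) x
     = (\<Sum>w\<in>S. p w * ((norm ((of_int_vec x + real (Suc k) *\<^sub>R m - C) + (of_int_vec w - m)))\<^sup>2 + real k * V))"
    unfolding Tk_Suc_apply by (simp add: IH r del: of_nat_Suc)
  also have "\<dots> = (\<Sum>w\<in>S. p w * (norm ((of_int_vec x + real (Suc k) *\<^sub>R m - C) + (of_int_vec w - m)))\<^sup>2) + real k * V"
    by (simp add: distrib_left sum.distrib s1 flip: sum_distrib_right del: of_nat_Suc)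
  also have "\<dots> = (norm (of_int_vec x + real (Suc k) *\<^sub>R m - C))\<^sup>2 + V + real k * V"
    using one_step_quad[OF fin s1, of "of_int_vec x + real (Suc k) *\<^sub>R m - C"] m_def V_def by simp
  finally show ?case by (simp add: m_def[symmetric] V_def[symmetric] algebra_simps)
qed

lemma Top_jensen:
  assumes pos: "\<And>w. w \<in> S \<Longrightarrow> 0 \<le> p w" and s1: "sum p S = 1"
  shows "(Top p S f x)\<^sup>2 \<le> Top p S (\<lambda>y. (f y)\<^sup>2) x"
proof -
  define A where "A = Top p S f x"
  have "0 \<le> (\<Sum>w\<in>S. p w * (f (x + w) - A)\<^sup>2)"
    by (intro sum_nonneg mult_nonneg_nonneg pos) auto
  also have "\<dots> = (\<Sum>w\<in>S. p w * (f (x + w))\<^sup>2) - 2 * A * (\<Sum>w\<in>S. p w * f (x + w)) + A\<^sup>2 * sum p S"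
    by (simp add: power2_diff algebra_simps sum.distrib sum_subtractf sum_distrib_left sum_distrib_right)
  also have "\<dots> = Top p S (\<lambda>y. (f y)\<^sup>2) x - A\<^sup>2"
    by (simp add: Top_def A_def s1 power2_eq_square)
  finally show ?thesis by (simp add: A_def)
qed

inductive_set Lin :: "(int \<Rightarrow> 'x \<Rightarrow> 'w \<Rightarrow> real) \<Rightarrow> int \<Rightarrow> ('w \<Rightarrow> real) set"
  for \<xi> :: "int \<Rightarrow> 'x \<Rightarrow> 'w \<Rightarrow> real" and k :: int where
  base: "s \<le> k \<Longrightarrow> \<xi> s y \<in> Lin \<xi> k"
| zero: "(\<lambda>\<omega>. 0) \<in> Lin \<xi> k"
| add: "f \<in> Lin \<xi> k \<Longrightarrow> g \<in> Lin \<xi> k \<Longrightarrow> (\<lambda>\<omega>. f \<omega> + g \<omega>) \<in> Lin \<xi> k"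
| scale: "f \<in> Lin \<xi> k \<Longrightarrow> (\<lambda>\<omega>. c * f \<omega>) \<in> Lin \<xi> k"

lemma Lin_mono: "f \<in> Lin \<xi> k \<Longrightarrow> k \<le> k' \<Longrightarrow> f \<in> Lin \<xi> k'"
  by (induction rule: Lin.induct) (auto intro: Lin.intros)

lemma Lin_sum: "finite A \<Longrightarrow> (\<And>a. a \<in> A \<Longrightarrow> F a \<in> Lin \<xi> k) \<Longrightarrow> (\<lambda>\<omega>. \<Sum>a\<in>A. F a \<omega>) \<in> Lin \<xi> k"
proof (induction A rule: finite_induct)
  case empty
  then show ?case by (simp add: Lin.zero)
next
  case (insert a A)
  then show ?case by (simp add: Lin.add)
qed

lemma sq_int_prod:
  fixes f g :: "'w \<Rightarrow> real"
  assumes "f \<in> borel_measurable M" "g \<in> borel_measurable M"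
    "integrable M (\<lambda>\<omega>. (f \<omega>)\<^sup>2)" "integrable M (\<lambda>\<omega>. (g \<omega>)\<^sup>2)"
  shows "integrable M (\<lambda>\<omega>. f \<omega> * g \<omega>)"
proof (rule Bochner_Integration.integrable_bound[where f="\<lambda>\<omega>. (f \<omega>)\<^sup>2 + (g \<omega>)\<^sup>2"])
  show "integrable M (\<lambda>\<omega>. (f \<omega>)\<^sup>2 + (g \<omega>)\<^sup>2)" using assms by simp
  show "(\<lambda>\<omega>. f \<omega> * g \<omega>) \<in> borel_measurable M" using assms by simp
  have "\<And>a b::real. \<bar>a * b\<bar> \<le> a\<^sup>2 + b\<^sup>2"
  proof -
    fix a b :: real
    have "0 \<le> (\<bar>a\<bar> - \<bar>b\<bar>)\<^sup>2" by simp
    then have "2 * (\<bar>a\<bar> * \<bar>b\<bar>) \<le> a\<^sup>2 + b\<^sup>2" by (simp add: power2_diff)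
    moreover have "0 \<le> \<bar>a\<bar> * \<bar>b\<bar>" by simp
    ultimately show "\<bar>a * b\<bar> \<le> a\<^sup>2 + b\<^sup>2" unfolding abs_mult by linarith
  qed
  then show "AE x in M. norm (f x * g x) \<le> norm ((f x)\<^sup>2 + (g x)\<^sup>2)" by simp
qed

locale noise_setup =
  fixes M :: "'w measure" and \<xi> :: "int \<Rightarrow> 'x \<Rightarrow> 'w \<Rightarrow> real"
  assumes prob: "prob_space M"
    and indep: "prob_space.indep_vars M (\<lambda>_. borel) (\<lambda>(t, x). \<xi> t x) UNIV"
    and mean: "\<And>t x. integrable M (\<xi> t x) \<and> integral\<^sup>L M (\<xi> t x) = 0"
    and var: "\<And>t x. integrable M (\<lambda>\<omega>. (\<xi> t x \<omega>)\<^sup>2)"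
begin

lemma xi_meas: "\<xi> t x \<in> borel_measurable M"
proof -
  have "(\<lambda>(t, x). \<xi> t x) (t, x) \<in> borel_measurable M"
    using indep unfolding prob_space.indep_vars_def[OF prob] by blast
  then show ?thesis by simp
qed

lemma Lin_props: "f \<in> Lin \<xi> k \<Longrightarrow> f \<in> borel_measurable M \<and> integrable M f \<and> integrable M (\<lambda>\<omega>. (f \<omega>)\<^sup>2)"
proof (induction rule: Lin.induct)
  case (base s y)
  then show ?case using xi_meas mean var by blast
next
  case zero
  then show ?case by simp
next
  case (add f g)
  have m: "(\<lambda>\<omega>. f \<omega> + g \<omega>) \<in> borel_measurable M" using add by (intro borel_measurable_add) auto
  have "integrable M (\<lambda>\<omega>. (f \<omega> + g \<omega>)\<^sup>2)"
  proof -
    have "integrable M (\<lambda>\<omega>. (f \<omega>)\<^sup>2 + 2 * (f \<omega> * g \<omega>) + (g \<omega>)\<^sup>2)"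
      using add sq_int_prod[of f M g] by simp
    then show ?thesis by (simp add: power2_sum algebra_simps)
  qed
  then show ?case using add m by simp
next
  case (scale f c)
  then show ?case by (auto simp: power_mult_distrib intro: borel_measurable_times)
qed

lemma xi_prod: assumes "(s, y) \<noteq> (j, x)"
  shows "integral\<^sup>L M (\<lambda>\<omega>. \<xi> s y \<omega> * \<xi> j x \<omega>) = 0"
proof -
  have i2: "prob_space.indep_vars M (\<lambda>_. borel) (\<lambda>(t, x). \<xi> t x) {(s, y), (j, x)}"
    using prob_space.indep_vars_subset[OF prob indep] by blast
  have "integral\<^sup>L M (\<lambda>\<omega>. \<Prod>i\<in>{(s, y), (j, x)}. (\<lambda>(t, x). \<xi> t x) i \<omega>)
      = (\<Prod>i\<in>{(s, y), (j, x)}. integral\<^sup>L M ((\<lambda>(t, x). \<xi> t x) i))"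
    by (rule prob_space.indep_vars_lebesgue_integral[OF prob _ i2]) (auto simp: mean)
  then show ?thesis using assms mean by simp
qed

lemma Lin_orth: "f \<in> Lin \<xi> k \<Longrightarrow> k < j \<Longrightarrow>
   integrable M (\<lambda>\<omega>. f \<omega> * \<xi> j x \<omega>) \<and> integral\<^sup>L M (\<lambda>\<omega>. f \<omega> * \<xi> j x \<omega>) = 0"
proof (induction rule: Lin.induct)
  case (base s y)
  have "integrable M (\<lambda>\<omega>. \<xi> s y \<omega> * \<xi> j x \<omega>)"
    using sq_int_prod[OF xi_meas xi_meas var var] .
  moreover have "integral\<^sup>L M (\<lambda>\<omega>. \<xi> s y \<omega> * \<xi> j x \<omega>) = 0"
    using base by (intro xi_prod) auto
  ultimately show ?case by simp
next
  case zero
  then show ?case by simp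
next
  case (add f g)
  then show ?case by (simp add: distrib_right)
next
  case (scale f c)
  then show ?case by (simp add: mult.assoc)
qed

end


lemma noise_rep:
  fixes \<xi> :: "int \<Rightarrow> int^'d \<Rightarrow> 'w \<Rightarrow> real" and D :: "nat \<Rightarrow> int^'d \<Rightarrow> 'w \<Rightarrow> real"
  assumes D0: "\<And>x \<omega>. \<omega> \<in> space M \<Longrightarrow> D 0 x \<omega> = 0"
    and DS: "\<And>k x \<omega>. \<omega> \<in> space M \<Longrightarrow> D (Suc k) x \<omega> = Top p S (\<lambda>y. D k y \<omega>) x + \<xi> (int k + 1) x \<omega>"
    and fin: "finite S"
  shows "\<exists>f\<in>Lin \<xi> (int k). \<forall>\<omega>\<in>space M. D k x \<omega> = f \<omega>"
proof (induction k arbitrary: x)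
  case 0
  show ?case by (rule bexI[of _ "\<lambda>\<omega>. 0"]) (auto simp: D0 intro: Lin.zero)
next
  case (Suc k)
  obtain F where F1: "\<And>y. F y \<in> Lin \<xi> (int k)" and F2: "\<And>y \<omega>. \<omega> \<in> space M \<Longrightarrow> D k y \<omega> = F y \<omega>"
    using Suc.IH by metis
  let ?f = "\<lambda>\<omega>. (\<lambda>\<omega>. \<Sum>w\<in>S. p w * F (x + w) \<omega>) \<omega> + \<xi> (int k + 1) x \<omega>"
  have "?f \<in> Lin \<xi> (int (Suc k))"
  proof (rule Lin.add)
    have "(\<lambda>\<omega>. \<Sum>w\<in>S. p w * F (x + w) \<omega>) \<in> Lin \<xi> (int k)"
      using fin by (intro Lin_sum Lin.scale F1)
    then show "(\<lambda>\<omega>. \<Sum>w\<in>S. p w * F (x + w) \<omega>) \<in> Lin \<xi> (int (Suc k))"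
      by (rule Lin_mono) simp
    show "\<xi> (int k + 1) x \<in> Lin \<xi> (int (Suc k))" by (rule Lin.base) simp
  qed
  moreover have "\<forall>\<omega>\<in>space M. D (Suc k) x \<omega> = ?f \<omega>"
    using DS F2 by (simp add: Top_def)
  ultimately show ?case by (intro bexI[of _ ?f]) auto
qed

lemma noise_moment:
  fixes \<xi> :: "int \<Rightarrow> int^'d \<Rightarrow> 'w \<Rightarrow> real" and D :: "nat \<Rightarrow> int^'d \<Rightarrow> 'w \<Rightarrow> real"
  assumes ns: "noise_setup M \<xi>"
    and D0: "\<And>x \<omega>. \<omega> \<in> space M \<Longrightarrow> D 0 x \<omega> = 0"
    and DS: "\<And>k x \<omega>. \<omega> \<in> space M \<Longrightarrow> D (Suc k) x \<omega> = Top p S (\<lambda>y. D k y \<omega>) x + \<xi> (int k + 1) x \<omega>"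
    and fin: "finite S" and pos: "\<And>w. w \<in> S \<Longrightarrow> 0 \<le> p w" and s1: "sum p S = 1"
    and sig: "\<And>t x. integral\<^sup>L M (\<lambda>\<omega>. (\<xi> t x \<omega>)\<^sup>2) = \<sigma>2"
  shows "D k x \<in> borel_measurable M \<and> integrable M (\<lambda>\<omega>. (D k x \<omega>)\<^sup>2) \<and> integral\<^sup>L M (\<lambda>\<omega>. (D k x \<omega>)\<^sup>2) \<le> real k * \<sigma>2"
proof -
  have rep: "\<And>k x. \<exists>f\<in>Lin \<xi> (int k). \<forall>\<omega>\<in>space M. D k x \<omega> = f \<omega>"
    by (rule noise_rep[OF D0 DS fin])
  have meas: "\<And>k x. D k x \<in> borel_measurable M"
  proof -
    fix k x
    obtain f where f: "f \<in> Lin \<xi> (int k)" "\<forall>\<omega>\<in>space M. D k x \<omega> = f \<omega>" using rep by blast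
    then show "D k x \<in> borel_measurable M"
      using noise_setup.Lin_props[OF ns f(1)] measurable_cong[of M "D k x" f] by auto
  qed
  have "integral\<^sup>L M (\<lambda>\<omega>. (D k x \<omega>)\<^sup>2) \<le> real k * \<sigma>2"
  proof (induction k arbitrary: x)
    case 0
    then show ?case by (simp add: D0 cong: Bochner_Integration.integral_cong)
  next
    case (Suc k)
    obtain F where F1: "\<And>y. F y \<in> Lin \<xi> (int k)" and F2: "\<And>y \<omega>. \<omega> \<in> space M \<Longrightarrow> D k y \<omega> = F y \<omega>"
      using rep by metis
    define T where "T = (\<lambda>\<omega>. \<Sum>w\<in>S. p w * F (x + w) \<omega>)"
    define g where "g = \<xi> (int k + 1) x"
    have TL: "T \<in> Lin \<xi> (int k)" unfolding T_def using fin by (intro Lin_sum Lin.scale F1)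
    note TP = noise_setup.Lin_props[OF ns TL]
    have TO: "integrable M (\<lambda>\<omega>. T \<omega> * g \<omega>) \<and> integral\<^sup>L M (\<lambda>\<omega>. T \<omega> * g \<omega>) = 0"
      unfolding g_def by (rule noise_setup.Lin_orth[OF ns TL]) simp
    have gv: "integrable M (\<lambda>\<omega>. (g \<omega>)\<^sup>2)" "integral\<^sup>L M (\<lambda>\<omega>. (g \<omega>)\<^sup>2) = \<sigma>2"
      unfolding g_def using noise_setup.var[OF ns] sig by auto
    have FL: "\<And>y. integrable M (\<lambda>\<omega>. (F y \<omega>)\<^sup>2)" using noise_setup.Lin_props[OF ns F1] by blast
    have FE: "\<And>y. integral\<^sup>L M (\<lambda>\<omega>. (F y \<omega>)\<^sup>2) \<le> real k * \<sigma>2"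
    proof -
      fix y
      have "integral\<^sup>L M (\<lambda>\<omega>. (F y \<omega>)\<^sup>2) = integral\<^sup>L M (\<lambda>\<omega>. (D k y \<omega>)\<^sup>2)"
        by (rule Bochner_Integration.integral_cong) (simp_all add: F2)
      then show "integral\<^sup>L M (\<lambda>\<omega>. (F y \<omega>)\<^sup>2) \<le> real k * \<sigma>2" using Suc.IH by simp
    qed
    have "integral\<^sup>L M (\<lambda>\<omega>. (D (Suc k) x \<omega>)\<^sup>2) = integral\<^sup>L M (\<lambda>\<omega>. (T \<omega>)\<^sup>2 + 2 * (T \<omega> * g \<omega>) + (g \<omega>)\<^sup>2)"
      by (rule Bochner_Integration.integral_cong)
        (simp_all add: DS Top_def F2 T_def g_def power2_sum algebra_simps)
    also have "\<dots> = integral\<^sup>L M (\<lambda>\<omega>. (T \<omega>)\<^sup>2) + \<sigma>2"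
      using TP TO gv by simp
    also have "integral\<^sup>L M (\<lambda>\<omega>. (T \<omega>)\<^sup>2) \<le> integral\<^sup>L M (\<lambda>\<omega>. \<Sum>w\<in>S. p w * (F (x + w) \<omega>)\<^sup>2)"
    proof (rule integral_mono)
      show "integrable M (\<lambda>\<omega>. (T \<omega>)\<^sup>2)" using TP by blast
      show "integrable M (\<lambda>\<omega>. \<Sum>w\<in>S. p w * (F (x + w) \<omega>)\<^sup>2)" using FL by simp
      fix \<omega>
      show "(T \<omega>)\<^sup>2 \<le> (\<Sum>w\<in>S. p w * (F (x + w) \<omega>)\<^sup>2)"
        using Top_jensen[OF pos s1, of "\<lambda>y. F y \<omega>" x] by (simp add: T_def Top_def)
    qed
    also have "integral\<^sup>L M (\<lambda>\<omega>. \<Sum>w\<in>S. p w * (F (x + w) \<omega>)\<^sup>2) = (\<Sum>w\<in>S. p w * integral\<^sup>L M (\<lambda>\<omega>. (F (x + w) \<omega>)\<^sup>2))"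
      using FL by simp
    also have "\<dots> \<le> (\<Sum>w\<in>S. p w * (real k * \<sigma>2))"
      by (intro sum_mono mult_left_mono FE pos)
    also have "\<dots> = real k * \<sigma>2" by (simp add: s1 flip: sum_distrib_right)
    finally show ?case by (simp add: algebra_simps)
  qed
  moreover have "integrable M (\<lambda>\<omega>. (D k x \<omega>)\<^sup>2)"
  proof -
    obtain f where f: "f \<in> Lin \<xi> (int k)" "\<forall>\<omega>\<in>space M. D k x \<omega> = f \<omega>" using rep by blast
    have "integrable M (\<lambda>\<omega>. (f \<omega>)\<^sup>2)" using noise_setup.Lin_props[OF ns f(1)] by blast
    then show ?thesis by (rule Bochner_Integration.integrable_cong[THEN iffD1, rotated 2]) (simp_all add: f(2))
  qed
  ultimately show ?thesis using meas by blast
qed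

lemma det_bound:
  fixes f :: "int^'d \<Rightarrow> real" and u0 :: "real^'d \<Rightarrow> real"
  assumes fin: "finite S" and pos: "\<And>w. w \<in> S \<Longrightarrow> 0 \<le> p w" and s1: "sum p S = 1"
    and bd: "\<And>w. w \<in> S \<Longrightarrow> norm (of_int_vec w) \<le> Mb"
    and n: "n \<ge> 1" and del: "\<delta> > 0" and B0: "B \<ge> 0"
    and H2: "\<And>y. norm (of_int_vec y - of_int_vec x0) \<le> real k * Mb \<Longrightarrow>
        \<bar>f y - u0 ((1 / real n) *\<^sub>R of_int_vec y)\<bar> \<le> S0"
    and H1: "\<And>y. norm (of_int_vec y - of_int_vec x0) \<le> real k * Mb \<Longrightarrow>
        norm ((1 / real n) *\<^sub>R of_int_vec y) \<le> R"
    and H3: "\<And>z. norm z \<le> R \<Longrightarrow> norm (z - c) < \<delta> \<Longrightarrow> \<bar>u0 z - u0 c\<bar> \<le> \<eta>"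
    and H4: "\<And>z. norm z \<le> R \<Longrightarrow> \<bar>u0 z - u0 c\<bar> \<le> B"
    and H5: "0 \<le> \<eta>"
  shows "\<bar>(Top p S ^^ k) f x0 - u0 c\<bar> \<le> S0 + \<eta> + B / (\<delta>\<^sup>2 * (real n)\<^sup>2) *
      ((norm (of_int_vec x0 + real k *\<^sub>R (\<Sum>v\<in>S. p v *\<^sub>R of_int_vec v) - real n *\<^sub>R c))\<^sup>2
       + real k * (\<Sum>w\<in>S. p w * (norm (of_int_vec w - (\<Sum>v\<in>S. p v *\<^sub>R of_int_vec v)))\<^sup>2))"
proof -
  define K where "K = B / (\<delta>\<^sup>2 * (real n)\<^sup>2)"
  have K0: "K \<ge> 0" using B0 by (simp add: K_def)
  define g where "g = (\<lambda>y. (S0 + \<eta>) + K * (norm (of_int_vec y - real n *\<^sub>R c))\<^sup>2)"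
  have np: "real n > 0" using n by simp
  have pt: "\<bar>f y - u0 c\<bar> \<le> g y" if y: "norm (of_int_vec y - of_int_vec x0) \<le> real k * Mb" for y
  proof -
    define z where "z = (1 / real n) *\<^sub>R of_int_vec y"
    have zR: "norm z \<le> R" using H1[OF y] z_def by simp
    have e1: "\<bar>f y - u0 z\<bar> \<le> S0" using H2[OF y] z_def by simp
    have dz: "of_int_vec y - real n *\<^sub>R c = real n *\<^sub>R (z - c)"
      using np by (simp add: z_def scaleR_diff_right)
    have nq: "(norm (of_int_vec y - real n *\<^sub>R c))\<^sup>2 = (real n)\<^sup>2 * (norm (z - c))\<^sup>2"
      by (simp add: dz power_mult_distrib)
    have e2: "\<bar>u0 z - u0 c\<bar> \<le> \<eta> + K * (norm (of_int_vec y - real n *\<^sub>R c))\<^sup>2"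
    proof (cases "norm (z - c) < \<delta>")
      case True
      then show ?thesis using H3[OF zR] K0 by (simp add: add_increasing2)
    next
      case False
      then have "\<delta>\<^sup>2 \<le> (norm (z - c))\<^sup>2" using del by (simp add: power_mono)
      then have "1 \<le> (norm (z - c))\<^sup>2 / \<delta>\<^sup>2" using del by simp
      then have "B \<le> B * ((norm (z - c))\<^sup>2 / \<delta>\<^sup>2)" using B0 mult_left_mono[of 1 "(norm (z - c))\<^sup>2 / \<delta>\<^sup>2" B] by simp
      also have "\<dots> = K * (norm (of_int_vec y - real n *\<^sub>R c))\<^sup>2"
        using np by (simp add: K_def nq field_simps)
      finally show ?thesis using H4[OF zR] H5 by linarith
    qed
    show ?thesis using e1 e2 unfolding g_def by linarith
  qed
  have Tsub: "(Top p S ^^ k) (\<lambda>y. f y + (- u0 c)) x0 = (Top p S ^^ k) f x0 - u0 c"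
    by (simp only: Tk_add Tk_const[OF s1])
  have Tg: "(Top p S ^^ k) g x0 = (S0 + \<eta>) + K *
      ((norm (of_int_vec x0 + real k *\<^sub>R (\<Sum>v\<in>S. p v *\<^sub>R of_int_vec v) - real n *\<^sub>R c))\<^sup>2
       + real k * (\<Sum>w\<in>S. p w * (norm (of_int_vec w - (\<Sum>v\<in>S. p v *\<^sub>R of_int_vec v)))\<^sup>2))"
    unfolding g_def by (simp add: Tk_add Tk_const[OF s1] Tk_scale Tk_quad[OF fin s1])
  have up: "(Top p S ^^ k) (\<lambda>y. f y + (- u0 c)) x0 \<le> (Top p S ^^ k) g x0"
    by (rule Tk_mono_local[OF pos bd]) (use pt in force)+
  have lo: "(Top p S ^^ k) (\<lambda>y. (-1) * g y) x0 \<le> (Top p S ^^ k) (\<lambda>y. f y + (- u0 c)) x0"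
    by (rule Tk_mono_local[OF pos bd]) (use pt in force)+
  have lo': "(Top p S ^^ k) (\<lambda>y. (-1) * g y) x0 = - (Top p S ^^ k) g x0"
    by (simp only: Tk_scale)
  show ?thesis using up lo lo' Tsub Tg K_def by (simp add: abs_le_iff)
qed

lemma finite_box: "finite {y::int^'d. \<forall>i. \<bar>y $ i\<bar> \<le> K}"
proof (rule finite_subset)
  show "{y::int^'d. \<forall>i. \<bar>y $ i\<bar> \<le> K} \<subseteq> vec_lambda ` (PiE UNIV (\<lambda>_. {-K..K}))"
  proof
    fix y :: "int^'d" assume "y \<in> {y. \<forall>i. \<bar>y $ i\<bar> \<le> K}"
    then have "vec_nth y \<in> PiE UNIV (\<lambda>_. {-K..K})" by (auto simp: abs_le_iff) (metis minus_le_iff)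
    then show "y \<in> vec_lambda ` (PiE UNIV (\<lambda>_. {-K..K}))"
      by (intro image_eqI[of _ _ "vec_nth y"]) simp_all
  qed
  show "finite (vec_lambda ` (PiE UNIV (\<lambda>_. {-K..K})) :: (int^'d) set)"
    by (intro finite_imageI finite_PiE) auto
qed

lemma floor_vec_finite:
  fixes R :: real
  shows "finite (floor_vec n ` cball (0::real^'d) R)"
proof (rule finite_subset[OF _ finite_box[of "\<lceil>real n * R\<rceil> + 1"]])
  show "floor_vec n ` cball (0::real^'d) R \<subseteq> {y. \<forall>i. \<bar>y $ i\<bar> \<le> \<lceil>real n * R\<rceil> + 1}"
  proof clarify
    fix x :: "real^'d" and i assume x: "x \<in> cball 0 R"
    have "\<bar>x $ i\<bar> \<le> R" using x component_le_norm_cart[of x i] by simp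
    then have a: "\<bar>real n * x $ i\<bar> \<le> real n * R" by (simp add: abs_mult mult_left_mono)
    have "\<bar>\<lfloor>real n * x $ i\<rfloor>\<bar> \<le> \<lceil>real n * R\<rceil> + 1"
    proof -
      have "real_of_int \<lfloor>real n * x $ i\<rfloor> \<le> real n * R" using a by linarith
      moreover have "real_of_int \<lfloor>real n * x $ i\<rfloor> > - real n * R - 1" using a by linarith
      moreover have "real n * R \<le> real_of_int \<lceil>real n * R\<rceil>" by (rule le_of_int_ceiling)
      ultimately have "real_of_int \<bar>\<lfloor>real n * x $ i\<rfloor>\<bar> \<le> real_of_int (\<lceil>real n * R\<rceil> + 1)" by linarith
      then show ?thesis by linarith
    qed
    then show "\<bar>floor_vec n x $ i\<bar> \<le> \<lceil>real n * R\<rceil> + 1" by (simp add: floor_vec_def)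
  qed
qed

lemma u0_bounded:
  fixes u0 :: "real^'d \<Rightarrow> real"
  assumes "continuous_on UNIV u0"
  shows "\<exists>Bu. \<forall>x\<in>cball 0 R. \<bar>u0 x\<bar> \<le> Bu"
proof -
  have "compact (u0 ` cball 0 R)"
    by (rule compact_continuous_image) (auto intro: continuous_on_subset[OF assms])
  then have "bounded (u0 ` cball 0 R)" by (rule compact_imp_bounded)
  then show ?thesis unfolding bounded_iff by auto
qed

lemma sup_props:
  fixes H :: "int^'d \<Rightarrow> 'w \<Rightarrow> real" and u0 :: "real^'d \<Rightarrow> real" and n :: nat and R :: real
  assumes Hm: "\<And>y. H y \<in> borel_measurable M" and u0c: "continuous_on UNIV u0" and R: "0 \<le> R"
  defines "Sf \<equiv> (\<lambda>\<omega>. SUP x\<in>cball 0 R. \<bar>H (floor_vec n x) \<omega> / real n - u0 x\<bar>)"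
  shows "Sf \<in> borel_measurable M"
    and "\<And>x \<omega>. x \<in> cball 0 R \<Longrightarrow> \<bar>H (floor_vec n x) \<omega> / real n - u0 x\<bar> \<le> Sf \<omega>"
proof -
  define Y where "Y = floor_vec n ` cball (0::real^'d) R"
  have Yf: "finite Y" unfolding Y_def by (rule floor_vec_finite)
  have Yne: "Y \<noteq> {}" using R unfolding Y_def by auto
  obtain Bu where Bu: "\<And>x. x \<in> cball 0 R \<Longrightarrow> \<bar>u0 x\<bar> \<le> Bu" using u0_bounded[OF u0c] by blast
  have bdd: "bdd_above ((\<lambda>x. \<bar>a / real n - u0 x\<bar>) ` A)" if "A \<subseteq> cball 0 R" for a A
  proof (rule bdd_aboveI2)
    fix x assume "x \<in> A"
    then have "\<bar>u0 x\<bar> \<le> Bu" using Bu that by blast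
    then show "\<bar>a / real n - u0 x\<bar> \<le> \<bar>a / real n\<bar> + Bu" by linarith
  qed
  have bddS: "bdd_above ((\<lambda>x. \<bar>H (floor_vec n x) \<omega> / real n - u0 x\<bar>) ` cball 0 R)" for \<omega>
  proof (rule bdd_aboveI2)
    fix x :: "real^'d" assume x: "x \<in> cball 0 R"
    then have "\<bar>u0 x\<bar> \<le> Bu" using Bu by blast
    moreover have "\<bar>H (floor_vec n x) \<omega>\<bar> \<le> Max ((\<lambda>y. \<bar>H y \<omega>\<bar>) ` Y)"
      using x Yf by (intro Max_ge) (auto simp: Y_def)
    ultimately have "\<bar>H (floor_vec n x) \<omega> / real n - u0 x\<bar> \<le> Max ((\<lambda>y. \<bar>H y \<omega>\<bar>) ` Y) / real n + Bu"
    proof -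
      have "\<bar>H (floor_vec n x) \<omega> / real n\<bar> \<le> Max ((\<lambda>y. \<bar>H y \<omega>\<bar>) ` Y) / real n"
        using \<open>\<bar>H (floor_vec n x) \<omega>\<bar> \<le> Max ((\<lambda>y. \<bar>H y \<omega>\<bar>) ` Y)\<close>
        by (simp add: abs_divide divide_right_mono)
      then show ?thesis using \<open>\<bar>u0 x\<bar> \<le> Bu\<close> by linarith
    qed
    then show "\<bar>H (floor_vec n x) \<omega> / real n - u0 x\<bar> \<le> Max ((\<lambda>y. \<bar>H y \<omega>\<bar>) ` Y) / real n + Bu" .
  qed
  show up: "\<And>x \<omega>. x \<in> cball 0 R \<Longrightarrow> \<bar>H (floor_vec n x) \<omega> / real n - u0 x\<bar> \<le> Sf \<omega>"
    unfolding Sf_def by (rule cSUP_upper[OF _ bddS])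
  define C where "C = (\<lambda>y. {x \<in> cball (0::real^'d) R. floor_vec n x = y})"
  define \<phi> where "\<phi> = (\<lambda>y a. SUP x\<in>C y. \<bar>a / real n - u0 x\<bar>)"
  have Cne: "C y \<noteq> {}" if "y \<in> Y" for y using that unfolding Y_def C_def by auto
  have bddC: "bdd_above ((\<lambda>x. \<bar>a / real n - u0 x\<bar>) ` C y)" for a y
    by (rule bdd) (auto simp: C_def)
  have lip: "(1 / real n)-lipschitz_on UNIV (\<phi> y)" if y: "y \<in> Y" for y
  proof (rule lipschitz_onI)
    have one: "\<phi> y a \<le> \<phi> y b + 1 / real n * \<bar>a - b\<bar>" for a b
      unfolding \<phi>_def
    proof (rule cSUP_least[OF Cne[OF y]])
      fix x assume x: "x \<in> C y"
      have "\<bar>a / real n - u0 x\<bar> \<le> \<bar>b / real n - u0 x\<bar> + \<bar>a / real n - b / real n\<bar>" by linarith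
      also have "\<bar>a / real n - b / real n\<bar> = 1 / real n * \<bar>a - b\<bar>"
        by (simp add: diff_divide_distrib[symmetric] abs_divide)
      also have "\<bar>b / real n - u0 x\<bar> \<le> (SUP x\<in>C y. \<bar>b / real n - u0 x\<bar>)"
        by (rule cSUP_upper[OF x bddC])
      finally show "\<bar>a / real n - u0 x\<bar> \<le> (SUP x\<in>C y. \<bar>b / real n - u0 x\<bar>) + 1 / real n * \<bar>a - b\<bar>"
        by simp
    qed
    fix a b :: real
    show "dist (\<phi> y a) (\<phi> y b) \<le> 1 / real n * dist a b"
      using one[of a b] one[of b a] by (simp add: dist_real_def abs_minus_commute abs_le_iff)
    show "0 \<le> 1 / real n" by simp
  qed
  have eq: "Sf \<omega> = (MAX y\<in>Y. \<phi> y (H y \<omega>))" for \<omega>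
  proof (rule antisym)
    show "Sf \<omega> \<le> (MAX y\<in>Y. \<phi> y (H y \<omega>))"
      unfolding Sf_def
    proof (rule cSUP_least)
      show "cball (0::real^'d) R \<noteq> {}" using R by auto
      fix x :: "real^'d" assume x: "x \<in> cball 0 R"
      have xC: "x \<in> C (floor_vec n x)" using x by (simp add: C_def)
      have yY: "floor_vec n x \<in> Y" using x by (simp add: Y_def)
      have "\<bar>H (floor_vec n x) \<omega> / real n - u0 x\<bar> \<le> \<phi> (floor_vec n x) (H (floor_vec n x) \<omega>)"
        unfolding \<phi>_def by (rule cSUP_upper[OF xC bddC])
      also have "\<dots> \<le> (MAX y\<in>Y. \<phi> y (H y \<omega>))" using yY Yf by (intro Max_ge) auto
      finally show "\<bar>H (floor_vec n x) \<omega> / real n - u0 x\<bar> \<le> (MAX y\<in>Y. \<phi> y (H y \<omega>))" .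
    qed
    have "(MAX y\<in>Y. \<phi> y (H y \<omega>)) \<in> (\<lambda>y. \<phi> y (H y \<omega>)) ` Y" using Yf Yne by (intro Max_in) auto
    then obtain y where y: "y \<in> Y" and ey: "(MAX y\<in>Y. \<phi> y (H y \<omega>)) = \<phi> y (H y \<omega>)" by auto
    have "\<phi> y (H y \<omega>) \<le> Sf \<omega>"
      unfolding \<phi>_def
    proof (rule cSUP_least[OF Cne[OF y]])
      fix x assume "x \<in> C y"
      then have x: "x \<in> cball 0 R" and fx: "floor_vec n x = y" by (auto simp: C_def)
      show "\<bar>H y \<omega> / real n - u0 x\<bar> \<le> Sf \<omega>" using up[OF x, of \<omega>] fx by simp
    qed
    then show "(MAX y\<in>Y. \<phi> y (H y \<omega>)) \<le> Sf \<omega>" using ey by simp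
  qed
  have "(\<lambda>\<omega>. MAX y\<in>Y. \<phi> y (H y \<omega>)) \<in> borel_measurable M"
  proof (rule borel_measurable_Max[OF Yf])
    fix y assume y: "y \<in> Y"
    have "\<phi> y \<in> borel_measurable borel"
      by (rule borel_measurable_continuous_onI, rule lipschitz_on_continuous_on[OF lip[OF y]])
    then show "(\<lambda>\<omega>. \<phi> y (H y \<omega>)) \<in> borel_measurable M"
      using measurable_compose[OF Hm] by blast
  qed
  moreover have "Sf = (\<lambda>\<omega>. MAX y\<in>Y. \<phi> y (H y \<omega>))" by (rule ext) (rule eq)
  ultimately show "Sf \<in> borel_measurable M" by simp
qed

lemma harness_reindex:
  "(\<Sum>y\<in>{y. p (y - x) \<noteq> 0}. p (y - x) * f y) = Top p {w. p w \<noteq> 0} f x"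
  unfolding Top_def
  by (rule sum.reindex_bij_witness[where i="\<lambda>w. x + w" and j="\<lambda>y. y - x"]) auto

lemma floor_err: "norm (of_int_vec (floor_vec n x) - real n *\<^sub>R x) \<le> real CARD('d)"
  for x :: "real^'d"
proof -
  have "norm (of_int_vec (floor_vec n x) - real n *\<^sub>R x) \<le> (\<Sum>i\<in>UNIV. \<bar>(of_int_vec (floor_vec n x) - real n *\<^sub>R x) $ i\<bar>)"
    by (rule norm_le_l1_cart)
  also have "\<dots> \<le> (\<Sum>i\<in>(UNIV::'d set). 1)"
  proof (rule sum_mono)
    fix i :: 'd
    have "\<bar>real_of_int \<lfloor>real n * x $ i\<rfloor> - real n * x $ i\<bar> \<le> 1"
      using floor_le_iff[of "real n * x $ i"] by linarith
    then show "\<bar>(of_int_vec (floor_vec n x) - real n *\<^sub>R x) $ i\<bar> \<le> 1"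
      by (simp add: of_int_vec_def floor_vec_def)
  qed
  finally show ?thesis by simp
qed

lemma floor_inv: "n \<ge> 1 \<Longrightarrow> floor_vec n ((1 / real n) *\<^sub>R of_int_vec y) = y"
  by (simp add: floor_vec_def of_int_vec_def vec_eq_iff)

lemma h0_meas:
  assumes prob: "prob_space M" and ind: "prob_space.indep_set M A (gen_sigma M H UNIV)"
  shows "H y \<in> borel_measurable M"
proof (rule measurableI)
  have "\<forall>i\<in>UNIV. case_bool A (gen_sigma M H UNIV) i \<subseteq> sets M"
    using ind unfolding prob_space.indep_set_def[OF prob] prob_space.indep_sets_def[OF prob] by blast
  then have "gen_sigma M H UNIV \<subseteq> sets M" by (metis UNIV_I bool.case(2))
  moreover fix X :: "real set" assume "X \<in> sets borel"
  then have "H y -` X \<inter> space M \<in> gen_sigma M H UNIV"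
    unfolding gen_sigma_def by (intro sigma_sets.Basic) blast
  ultimately show "H y -` X \<inter> space M \<in> sets M" by blast
qed simp

lemma finite_supp:
  assumes "\<forall>x. norm (of_int_vec x) > R0 \<longrightarrow> p x = 0"
  shows "finite {w::int^'d. p w \<noteq> 0}"
proof (rule finite_subset[OF _ finite_box[of "\<lceil>R0\<rceil>"]])
  show "{w::int^'d. p w \<noteq> 0} \<subseteq> {y. \<forall>i. \<bar>y $ i\<bar> \<le> \<lceil>R0\<rceil>}"
  proof clarify
    fix w :: "int^'d" and i assume "p w \<noteq> 0"
    then have "norm (of_int_vec w) \<le> R0" using assms by force
    moreover have "\<bar>of_int_vec w $ i\<bar> \<le> norm (of_int_vec w)" by (rule component_le_norm_cart)
    ultimately have "\<bar>real_of_int (w $ i)\<bar> \<le> R0" by (simp add: of_int_vec_def)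
    then have "real_of_int \<bar>w $ i\<bar> \<le> real_of_int \<lceil>R0\<rceil>"
      using le_of_int_ceiling[of R0] by linarith
    then show "\<bar>w $ i\<bar> \<le> \<lceil>R0\<rceil>" by linarith
  qed
qed

theorem theorem2p1:
  fixes p :: "int ^ 'd \<Rightarrow> real"
    and M :: "'w measure"
    and \<xi> :: "int \<Rightarrow> int ^ 'd \<Rightarrow> 'w \<Rightarrow> real"
    and h :: "nat \<Rightarrow> nat \<Rightarrow> int ^ 'd \<Rightarrow> 'w \<Rightarrow> real"
    and u0 :: "real ^ 'd \<Rightarrow> real"
  assumes prob: "prob_space M"
    and p_range: "\<And>x. 0 \<le> p x \<and> p x < 1"
    and p_bdd: "\<exists>R::real. \<forall>x. norm (of_int_vec x) > R \<longrightarrow> p x = 0"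
    and p_sum: "(p has_sum 1) UNIV"
    and p_aper: "\<And>u. add_subgroup_gen {u + x | x. p x > 0} = UNIV"
    and xi_indep: "prob_space.indep_vars M (\<lambda>_. borel) (\<lambda>(t, x). \<xi> t x) UNIV"
    and xi_ident: "\<And>t x. distr M borel (\<xi> t x) = distr M borel (\<xi> 0 0)"
    and xi_mean: "\<And>t x. integrable M (\<xi> t x) \<and> prob_space.expectation M (\<xi> t x) = 0"
    and xi_var: "\<And>t x. integrable M (\<lambda>\<omega>. (\<xi> t x \<omega>)\<^sup>2)"
    and harness: "\<And>n t x \<omega>. \<omega> \<in> space M \<Longrightarrow>
        h n (Suc t) x \<omega> = (\<Sum>y\<in>{y. p (y - x) \<noteq> 0}. p (y - x) * h n t y \<omega>) + \<xi> (int t + 1) x \<omega>"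
    and h0_indep: "\<And>n. prob_space.indep_set M
        (gen_sigma M (\<lambda>(s, x). \<xi> s x) {(s, x). s \<ge> 1}) (gen_sigma M (h n 0) UNIV)"
    and u0_cont: "continuous_on UNIV u0"
    and init: "\<And>\<epsilon> R. \<epsilon> > 0 \<Longrightarrow>
        (\<lambda>n. measure M {\<omega> \<in> space M.
            (SUP x\<in>cball 0 R. \<bar>h n 0 (floor_vec n x) \<omega> / real n - u0 x\<bar>) \<ge> \<epsilon>}) \<longlonglongrightarrow> 0"
  shows "\<forall>\<epsilon>>0. \<forall>t\<ge>0. \<forall>x.
        (\<lambda>n. measure M {\<omega> \<in> space M.
            \<bar>h n (nat \<lfloor>real n * t\<rfloor>) (floor_vec n x) \<omega> / real n
              - u0 (x + t *\<^sub>R mean_drift p)\<bar> \<ge> \<epsilon>}) \<longlonglongrightarrow> 0"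
proof (intro allI impI)
  fix \<epsilon> t :: real and x :: "real^'d"
  assume \<epsilon>: "\<epsilon> > 0" and t: "t \<ge> 0"
  define S where "S = {w. p w \<noteq> 0}"
  obtain R0 where R0: "\<forall>x. norm (of_int_vec x) > R0 \<longrightarrow> p x = 0" using p_bdd by blast
  define Mb where "Mb = max R0 0"
  have bd: "\<And>w. w \<in> S \<Longrightarrow> norm (of_int_vec w) \<le> Mb"
    using R0 unfolding S_def Mb_def by force
  have Mb0: "Mb \<ge> 0" by (simp add: Mb_def)
  have fin: "finite S" unfolding S_def by (rule finite_supp[OF R0])
  have pos: "\<And>w. w \<in> S \<Longrightarrow> 0 \<le> p w" using p_range by blast
  have eqs: "(p has_sum 1) UNIV = (p has_sum 1) S"
    by (rule has_sum_cong_neutral) (auto simp: S_def)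
  have "(p has_sum 1) S" using p_sum eqs by simp
  then have s1: "sum p S = 1" using has_sum_finite_iff[OF fin, of p 1] by simp
  define m where "m = mean_drift p"
  have m': "m = (\<Sum>v\<in>S. p v *\<^sub>R of_int_vec v)" by (simp add: m_def mean_drift_def S_def)
  define V where "V = (\<Sum>w\<in>S. p w * (norm (of_int_vec w - m))\<^sup>2)"
  have V0: "V \<ge> 0" unfolding V_def by (intro sum_nonneg mult_nonneg_nonneg pos) auto
  have ns: "noise_setup M \<xi>"
    by (rule noise_setup.intro[OF prob xi_indep xi_mean xi_var])
  define \<sigma>2 where "\<sigma>2 = integral\<^sup>L M (\<lambda>\<omega>. (\<xi> 0 0 \<omega>)\<^sup>2)"
  have sig: "\<And>s y. integral\<^sup>L M (\<lambda>\<omega>. (\<xi> s y \<omega>)\<^sup>2) = \<sigma>2"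
  proof -
    fix s y
    have pm: "(\<lambda>a::real. a\<^sup>2) \<in> borel_measurable borel" by measurable
    have "integral\<^sup>L M (\<lambda>\<omega>. (\<xi> s y \<omega>)\<^sup>2) = integral\<^sup>L (distr M borel (\<xi> s y)) (\<lambda>a. a\<^sup>2)"
      using integral_distr[OF noise_setup.xi_meas[OF ns] pm] by simp
    also have "\<dots> = integral\<^sup>L (distr M borel (\<xi> 0 0)) (\<lambda>a. a\<^sup>2)" by (subst xi_ident[of s y]) (rule refl)
    also have "\<dots> = \<sigma>2" unfolding \<sigma>2_def
      using integral_distr[OF noise_setup.xi_meas[OF ns] pm] by simp
    finally show "integral\<^sup>L M (\<lambda>\<omega>. (\<xi> s y \<omega>)\<^sup>2) = \<sigma>2" .
  qed
  have sig0: "\<sigma>2 \<ge> 0" unfolding \<sigma>2_def by simp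
  have hm: "\<And>n y. h n 0 y \<in> borel_measurable M"
    using h0_meas[OF prob h0_indep] by blast
  define D where "D n k y \<omega> = h n k y \<omega> - (Top p S ^^ k) (\<lambda>z. h n 0 z \<omega>) y" for n k y \<omega>
  have Dmom: "D n k y \<in> borel_measurable M \<and> integrable M (\<lambda>\<omega>. (D n k y \<omega>)\<^sup>2)
      \<and> integral\<^sup>L M (\<lambda>\<omega>. (D n k y \<omega>)\<^sup>2) \<le> real k * \<sigma>2" for n k y
  proof (rule noise_moment[OF ns _ _ fin pos s1 sig])
    show "\<And>x \<omega>. \<omega> \<in> space M \<Longrightarrow> D n 0 x \<omega> = 0" by (simp add: D_def)
    fix k x \<omega> assume \<omega>: "\<omega> \<in> space M"
    have e: "(\<lambda>z. h n k z \<omega>) = (\<lambda>z. D n k z \<omega> + (Top p S ^^ k) (\<lambda>z. h n 0 z \<omega>) z)"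
      by (simp add: D_def fun_eq_iff)
    show "D n (Suc k) x \<omega> = Top p S (\<lambda>y. D n k y \<omega>) x + \<xi> (int k + 1) x \<omega>"
    proof -
      have r: "(\<Sum>y\<in>{y. p (y - x) \<noteq> 0}. p (y - x) * h n k y \<omega>) = Top p S (\<lambda>y. h n k y \<omega>) x"
        using harness_reindex[of p x "\<lambda>y. h n k y \<omega>"] by (simp add: S_def)
      have "D n (Suc k) x \<omega> = Top p S (\<lambda>y. h n k y \<omega>) x + \<xi> (int k + 1) x \<omega> - Top p S ((Top p S ^^ k) (\<lambda>z. h n 0 z \<omega>)) x"
        unfolding D_def[of n "Suc k"] harness[OF \<omega>] r by simp
      also have "Top p S (\<lambda>y. h n k y \<omega>) x = Top p S (\<lambda>y. D n k y \<omega>) x + Top p S ((Top p S ^^ k) (\<lambda>z. h n 0 z \<omega>)) x"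
        unfolding e Top_add by simp
      finally show ?thesis by simp
    qed
  qed
  define k where "k n = nat \<lfloor>real n * t\<rfloor>" for n
  define x0 where "x0 n = floor_vec n x" for n
  define c where "c = x + t *\<^sub>R m"
  define Rr where "Rr = norm x + real CARD('d) + t * Mb + 1"
  have Rr0: "Rr \<ge> 0" unfolding Rr_def using t Mb0 by simp
  define Sf where "Sf n \<omega> = (SUP z\<in>cball 0 Rr. \<bar>h n 0 (floor_vec n z) \<omega> / real n - u0 z\<bar>)" for n \<omega>
  have Sfm: "\<And>n. Sf n \<in> borel_measurable M"
    unfolding Sf_def[abs_def] by (rule sup_props(1)[OF hm u0_cont Rr0])
  have Sfu: "\<And>n z \<omega>. z \<in> cball 0 Rr \<Longrightarrow> \<bar>h n 0 (floor_vec n z) \<omega> / real n - u0 z\<bar> \<le> Sf n \<omega>"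
    unfolding Sf_def by (rule sup_props(2)[OF hm u0_cont Rr0])
  obtain Bu where Bu: "\<And>z. z \<in> cball 0 Rr \<Longrightarrow> \<bar>u0 z\<bar> \<le> Bu" using u0_bounded[OF u0_cont] by blast
  have Bu0: "Bu \<ge> 0" using Bu[of 0] Rr0 by simp
  define B where "B = Bu + \<bar>u0 c\<bar>"
  have B0: "B \<ge> 0" using Bu0 by (simp add: B_def)
  define \<eta> where "\<eta> = \<epsilon> / 8"
  have "\<eta> > 0" using \<epsilon> by (simp add: \<eta>_def)
  then obtain \<delta> where \<delta>: "\<delta> > 0" and \<delta>c: "\<And>z. dist z c < \<delta> \<Longrightarrow> dist (u0 z) (u0 c) < \<eta>"
    using u0_cont unfolding continuous_on_iff by blast
  define Kq where "Kq = (real CARD('d) + norm m)\<^sup>2"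
  define C where "C = B * (Kq + t * V) / \<delta>\<^sup>2"
  have C0: "C \<ge> 0" unfolding C_def Kq_def using B0 t V0 by simp
  obtain N where N: "C * 8 / \<epsilon> < real N" using reals_Archimedean2 by blast
  have Npos: "real N > 0"
  proof -
    have "0 \<le> C * 8 / \<epsilon>" using C0 \<epsilon> by simp
    then show ?thesis using N by linarith
  qed
  define A where "A n = {\<omega> \<in> space M. Sf n \<omega> \<ge> \<epsilon> / 4}" for n
  define Nz where "Nz n = {\<omega> \<in> space M. (real n * \<epsilon> / 2)\<^sup>2 \<le> (D n (k n) (x0 n) \<omega>)\<^sup>2}" for n
  define Bad where "Bad n = {\<omega> \<in> space M. \<bar>h n (nat \<lfloor>real n * t\<rfloor>) (floor_vec n x) \<omega> / real n
              - u0 (x + t *\<^sub>R mean_drift p)\<bar> \<ge> \<epsilon>}" for n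
  have kle: "real (k n) \<le> real n * t" for n
    unfolding k_def using t by simp
  have kge: "real n * t - 1 < real (k n)" for n
    unfolding k_def using t by linarith
  have Am: "A n \<in> sets M" for n
  proof -
    have "A n = Sf n -` {\<epsilon> / 4..} \<inter> space M" by (auto simp: A_def)
    then show ?thesis using measurable_sets[OF Sfm] by simp
  qed
  have Nzm: "Nz n \<in> sets M" for n
  proof -
    have "(\<lambda>\<omega>. (D n (k n) (x0 n) \<omega>)\<^sup>2) \<in> borel_measurable M"
      using Dmom[of n "k n" "x0 n"] by (intro borel_measurable_power) blast
    moreover have "Nz n = (\<lambda>\<omega>. (D n (k n) (x0 n) \<omega>)\<^sup>2) -` {(real n * \<epsilon> / 2)\<^sup>2..} \<inter> space M"
      by (auto simp: Nz_def)
    ultimately show ?thesis using measurable_sets by simp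
  qed
  have Nzb: "measure M (Nz n) \<le> 4 * t * \<sigma>2 / \<epsilon>\<^sup>2 / real n" if n: "n \<ge> 1" for n
  proof -
    have np: "0 < (real n * \<epsilon> / 2)\<^sup>2" using n \<epsilon> by simp
    have "measure M (Nz n) \<le> integral\<^sup>L M (\<lambda>\<omega>. (D n (k n) (x0 n) \<omega>)\<^sup>2) / (real n * \<epsilon> / 2)\<^sup>2"
      unfolding Nz_def using Dmom by (intro integral_Markov_inequality_measure[OF _ _ _ np]) auto
    also have "\<dots> \<le> real (k n) * \<sigma>2 / (real n * \<epsilon> / 2)\<^sup>2"
      using Dmom np by (intro divide_right_mono) auto
    also have "\<dots> \<le> real n * t * \<sigma>2 / (real n * \<epsilon> / 2)\<^sup>2"
      using kle[of n] sig0 np by (intro divide_right_mono mult_right_mono) auto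
    also have "\<dots> = 4 * t * \<sigma>2 / \<epsilon>\<^sup>2 / real n"
      using n \<epsilon> by (simp add: power2_eq_square field_simps)
    finally show ?thesis .
  qed
  have sub: "Bad n \<subseteq> A n \<union> Nz n" if nN: "n \<ge> N" and n1: "n \<ge> 1" for n
  proof
    fix \<omega> assume \<omega>B: "\<omega> \<in> Bad n"
    then have \<omega>: "\<omega> \<in> space M" by (simp add: Bad_def)
    show "\<omega> \<in> A n \<union> Nz n"
    proof (cases "\<omega> \<in> A n")
      case True then show ?thesis by simp
    next
      case False
      then have SfS: "Sf n \<omega> < \<epsilon> / 4" using \<omega> by (simp add: A_def)
      have np: "real n > 0" using n1 by simp
      have H1: "norm ((1 / real n) *\<^sub>R of_int_vec y) \<le> Rr"
        if y: "norm (of_int_vec y - of_int_vec (x0 n)) \<le> real (k n) * Mb" for y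
      proof -
        have "norm (of_int_vec y) \<le> norm (of_int_vec y - of_int_vec (x0 n))
            + norm (of_int_vec (x0 n) - real n *\<^sub>R x) + norm (real n *\<^sub>R x)"
          using norm_triangle_ineq[of "of_int_vec y - of_int_vec (x0 n)" "of_int_vec (x0 n) - real n *\<^sub>R x"]
            norm_triangle_ineq[of "of_int_vec y - real n *\<^sub>R x" "real n *\<^sub>R x"]
          by simp
        also have "\<dots> \<le> real n * t * Mb + real CARD('d) + real n * norm x"
          using y floor_err[of n x] kle[of n] Mb0 mult_right_mono[OF kle[of n] Mb0]
          by (simp add: x0_def)
        also have "\<dots> \<le> real n * Rr"
        proof -
          have cd: "1 * real CARD('d) \<le> real n * real CARD('d)"
            using n1 by (intro mult_right_mono) auto
          have e: "real n * Rr = real n * norm x + real n * real CARD('d) + real n * t * Mb + real n"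
            by (simp add: Rr_def algebra_simps)
          show ?thesis unfolding e using cd np by linarith
        qed
        finally have "norm (of_int_vec y) \<le> real n * Rr" .
        then show ?thesis using np by (simp add: field_simps)
      qed
      have H2: "\<bar>(1 / real n) * h n 0 y \<omega> - u0 ((1 / real n) *\<^sub>R of_int_vec y)\<bar> \<le> Sf n \<omega>"
        if y: "norm (of_int_vec y - of_int_vec (x0 n)) \<le> real (k n) * Mb" for y
        using Sfu[of "(1 / real n) *\<^sub>R of_int_vec y" n \<omega>] H1[OF y] by (simp add: floor_inv[OF n1])
      have H3: "\<bar>u0 z - u0 c\<bar> \<le> \<eta>" if "norm z \<le> Rr" "norm (z - c) < \<delta>" for z
        using \<delta>c[of z] that by (simp add: dist_norm dist_real_def)
      have H4: "\<bar>u0 z - u0 c\<bar> \<le> B" if "norm z \<le> Rr" for z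
        using Bu[of z] that by (simp add: B_def)
      have det: "\<bar>(Top p S ^^ k n) (\<lambda>y. (1 / real n) * h n 0 y \<omega>) (x0 n) - u0 c\<bar> \<le> Sf n \<omega> + \<eta> + B / (\<delta>\<^sup>2 * (real n)\<^sup>2) *
          ((norm (of_int_vec (x0 n) + real (k n) *\<^sub>R m - real n *\<^sub>R c))\<^sup>2 + real (k n) * V)"
        unfolding m' V_def
        by (rule det_bound[OF fin pos s1 bd n1 \<delta> B0 H2 H1 H3 H4]) (use \<open>\<eta> > 0\<close> in \<open>simp_all add: m'\<close>)
      have kq: "(norm (of_int_vec (x0 n) + real (k n) *\<^sub>R m - real n *\<^sub>R c))\<^sup>2 \<le> Kq"
      proof -
        have eqv: "of_int_vec (x0 n) + real (k n) *\<^sub>R m - real n *\<^sub>R c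
            = (of_int_vec (x0 n) - real n *\<^sub>R x) + (real (k n) - real n * t) *\<^sub>R m"
          by (simp add: c_def algebra_simps)
        have "norm (of_int_vec (x0 n) + real (k n) *\<^sub>R m - real n *\<^sub>R c)
            \<le> norm (of_int_vec (x0 n) - real n *\<^sub>R x) + \<bar>real (k n) - real n * t\<bar> * norm m"
          unfolding eqv using norm_triangle_ineq[of "of_int_vec (x0 n) - real n *\<^sub>R x" "(real (k n) - real n * t) *\<^sub>R m"]
          by simp
        also have "\<dots> \<le> real CARD('d) + 1 * norm m"
          using floor_err[of n x] kle[of n] kge[of n] unfolding x0_def
          by (intro add_mono mult_right_mono) auto
        finally show ?thesis unfolding Kq_def by (intro power_mono) auto
      qed
      have err: "B / (\<delta>\<^sup>2 * (real n)\<^sup>2) * ((norm (of_int_vec (x0 n) + real (k n) *\<^sub>R m - real n *\<^sub>R c))\<^sup>2 + real (k n) * V)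
          \<le> C / real n"
      proof -
        have "B / (\<delta>\<^sup>2 * (real n)\<^sup>2) * ((norm (of_int_vec (x0 n) + real (k n) *\<^sub>R m - real n *\<^sub>R c))\<^sup>2 + real (k n) * V)
            \<le> B / (\<delta>\<^sup>2 * (real n)\<^sup>2) * (real n * Kq + real n * (t * V))"
        proof (intro mult_left_mono add_mono)
          show "(norm (of_int_vec (x0 n) + real (k n) *\<^sub>R m - real n *\<^sub>R c))\<^sup>2 \<le> real n * Kq"
          proof -
            have "1 * Kq \<le> real n * Kq" using n1 by (intro mult_right_mono) (auto simp: Kq_def)
            then show ?thesis using kq by linarith
          qed
          show "real (k n) * V \<le> real n * (t * V)"
            using mult_right_mono[OF kle[of n] V0] by (simp add: mult.assoc)
        qed (use B0 in simp)
        also have "\<dots> = C / real n"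
          using np \<delta> by (simp add: C_def power2_eq_square field_simps)
        finally show ?thesis .
      qed
      have "C / real n \<le> C / real N"
        using C0 nN Npos by (intro divide_left_mono) auto
      also have "\<dots> < \<epsilon> / 8"
        using N \<epsilon> C0 by (auto simp: field_simps divide_less_eq)
      finally have err2: "C / real n < \<epsilon> / 8" .
      have dt: "\<bar>(Top p S ^^ k n) (\<lambda>y. h n 0 y \<omega>) (x0 n) / real n - u0 c\<bar> < \<epsilon> / 2"
      proof -
        have "(Top p S ^^ k n) (\<lambda>y. (1 / real n) * h n 0 y \<omega>) (x0 n) = (Top p S ^^ k n) (\<lambda>y. h n 0 y \<omega>) (x0 n) / real n"
          by (simp only: Tk_scale) simp
        then show ?thesis using det err err2 SfS \<eta>_def by linarith
      qed
      have hB: "\<epsilon> \<le> \<bar>h n (k n) (x0 n) \<omega> / real n - u0 c\<bar>"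
        using \<omega>B by (simp add: Bad_def k_def x0_def c_def m_def)
      have "h n (k n) (x0 n) \<omega> / real n = (Top p S ^^ k n) (\<lambda>y. h n 0 y \<omega>) (x0 n) / real n + D n (k n) (x0 n) \<omega> / real n"
        by (simp add: D_def diff_divide_distrib)
      then have "\<epsilon> / 2 < \<bar>D n (k n) (x0 n) \<omega> / real n\<bar>" using hB dt by linarith
      then have "real n * \<epsilon> / 2 < \<bar>D n (k n) (x0 n) \<omega>\<bar>" using np by (simp add: abs_divide field_simps)
      then have "(real n * \<epsilon> / 2)\<^sup>2 \<le> (\<bar>D n (k n) (x0 n) \<omega>\<bar>)\<^sup>2"
        using np \<epsilon> by (intro power_mono) auto
      then have "\<omega> \<in> Nz n" using \<omega> by (simp add: Nz_def)
      then show ?thesis by simp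
    qed
  qed
  have upper: "measure M (Bad n) \<le> measure M (A n) + 4 * t * \<sigma>2 / \<epsilon>\<^sup>2 / real n"
    if "n \<ge> max N 1" for n
  proof -
    have "measure M (Bad n) \<le> measure M (A n \<union> Nz n)"
      using sub[of n] that Am Nzm
      by (intro finite_measure.finite_measure_mono[OF prob_space.finite_measure[OF prob]]) auto
    also have "\<dots> \<le> measure M (A n) + measure M (Nz n)" by (rule measure_Un_le[OF Am Nzm])
    also have "\<dots> \<le> measure M (A n) + 4 * t * \<sigma>2 / \<epsilon>\<^sup>2 / real n" using Nzb[of n] that by simp
    finally show ?thesis .
  qed
  have limA: "(\<lambda>n. measure M (A n)) \<longlonglongrightarrow> 0"
    using init[of "\<epsilon> / 4" Rr] \<epsilon> by (simp add: A_def Sf_def)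
  have lim2: "(\<lambda>n. measure M (A n) + 4 * t * \<sigma>2 / \<epsilon>\<^sup>2 / real n) \<longlonglongrightarrow> 0"
    using tendsto_add[OF limA lim_const_over_n[of "4 * t * \<sigma>2 / \<epsilon>\<^sup>2"]] by simp
  have "(\<lambda>n. measure M (Bad n)) \<longlonglongrightarrow> 0"
  proof (rule tendsto_sandwich[OF _ _ tendsto_const lim2])
    show "\<forall>\<^sub>F n in sequentially. 0 \<le> measure M (Bad n)" by simp
    show "\<forall>\<^sub>F n in sequentially. measure M (Bad n) \<le> measure M (A n) + 4 * t * \<sigma>2 / \<epsilon>\<^sup>2 / real n"
      using upper unfolding eventually_sequentially by blast
  qed
  then show "(\<lambda>n. measure M {\<omega> \<in> space M.
            \<bar>h n (nat \<lfloor>real n * t\<rfloor>) (floor_vec n x) \<omega> / real n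
              - u0 (x + t *\<^sub>R mean_drift p)\<bar> \<ge> \<epsilon>}) \<longlonglongrightarrow> 0"
    by (simp add: Bad_def)
qed

end
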